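(* Let $q>2$, $n\ge 2$, $u\in\mathcal C$ and $\Lambda\ge1$ with $\frac1\Lambda\le|u'(x)|\le\Lambda$ for all $x\in\mathbb{R}/\mathbb{Z}$. Then \[\big|\mathrm{TP}_{\mathrm{cl}}(u)-\mathrm{TP}(u)\big|\le(\mathrm{bil}\,u)^{2q}\Lambda^{2q}[u']_{W^{1-1/q,q}}^q(\Lambda-1).\]
   Context: $\mathcal C=\{u\in W^{2-1/q,q}(\mathbb{R}/\mathbb{Z},\mathbb{R}^n): u\text{ injective and }\min|u'|>0\}$. \[\mathrm{TP}(u)=\frac1q\iint_{\mathbb{R}/\mathbb{Z}\times\mathbb{R}/\mathbb{Z}}\frac{|u'(y)\wedge(u(x)-u(y))|^q}{|u(x)-u(y)|^{2q}}\,dx\,dy,\] with $|a\wedge b|$ defined via $\langle a\wedge b,c\wedge d\rangle=\langle a,c\rangle\langle b,d\rangle-\langle a,d\rangle\langle b,c\rangle$; the classical tangent-point functional is \[\mathrm{TP}_{\mathrm{cl}}(u)=\frac1q\iint_{\mathbb{R}/\mathbb{Z}\times\mathbb{R}/\mathbb{Z}}\frac{|P^\perp_{u'(y)}(u(x)-u(y))|^q}{|u(x)-u(y)|^{2q}}|u'(x)||u'(y)|\,dx\,dy,\] where $P^\perp_{u'(y)}$ is the orthogonal projection onto the orthogonal complement of $\mathbb{R}u'(y)$. $\mathrm{bil}(u)=\sup_{x\ne y}\frac{|x-y|}{|u(x)-u(y)|}$ with $|x-y|$ the distance in $\mathbb{R}/\mathbb{Z}$. $[f]_{W^{s,q}}=\big(\iint\frac{|f(x)-f(y)|^q}{|x-y|^{1+sq}}dx\,dy\big)^{1/q}$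 for $s\in(0,1)$. *)

theory Defs
  imports "HOL-Analysis.Analysis"
begin

text \<open>Curves on the circle R/Z are represented as 1-periodic maps real => real^'n.
  The derivative is the vector derivative.\<close>

definition circ_dist :: "real \<Rightarrow> real \<Rightarrow> real" where
  "circ_dist x y = \<bar>(x - y) - of_int (round (x - y))\<bar>"

definition dcurve :: "(real \<Rightarrow> real ^ 'n) \<Rightarrow> real \<Rightarrow> real ^ 'n" where
  "dcurve u x = vector_derivative u (at x)"

definition gag_integrand :: "(real \<Rightarrow> real ^ 'n) \<Rightarrow> real \<Rightarrow> real \<Rightarrow> real \<times> real \<Rightarrow> real" where
  "gag_integrand f s q z = norm (f (fst z) - f (snd z)) powr q / circ_dist (fst z) (snd z) powr (1 + s * q)"

definition gag_seminorm :: "(real \<Rightarrow> real ^ 'n) \<Rightarrow> real \<Rightarrow> real \<Rightarrow> real" where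
  "gag_seminorm f s q = (LINT z : {0..1} \<times> {0..1} | lborel. gag_integrand f s q z) powr (1 / q)"

text \<open>Membership in W^{2-1/q,q}(R/Z,R^n) (q > 2): a 1-periodic C^1 curve whose derivative has
  finite W^{1-1/q,q} Gagliardo seminorm (for q > 2 every element has a C^1 representative).\<close>
definition W2q :: "real \<Rightarrow> (real \<Rightarrow> real ^ 'n) \<Rightarrow> bool" where
  "W2q q u \<longleftrightarrow> (\<forall>x. u (x + 1) = u x) \<and> u C1_differentiable_on UNIV \<and>
     set_integrable lborel ({0..1} \<times> {0..1}) (gag_integrand (dcurve u) (1 - 1 / q) q)"

definition admissible :: "real \<Rightarrow> (real \<Rightarrow> real ^ 'n) \<Rightarrow> bool" where
  "admissible q u \<longleftrightarrow> W2q q u \<and> inj_on u {0..<1} \<and> (\<exists>c>0. \<forall>x. norm (dcurve u x) \<ge> c)"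

text \<open>|a \<and> b|, from <a\<and>b,c\<and>d> = <a,c><b,d> - <a,d><b,c>.\<close>
definition wedge_norm :: "real ^ 'n \<Rightarrow> real ^ 'n \<Rightarrow> real" where
  "wedge_norm a b = sqrt ((a \<bullet> a) * (b \<bullet> b) - (a \<bullet> b) * (b \<bullet> a))"

definition proj_perp :: "real ^ 'n \<Rightarrow> real ^ 'n \<Rightarrow> real ^ 'n" where
  "proj_perp v w = w - ((w \<bullet> v) / (v \<bullet> v)) *\<^sub>R v"

definition TP :: "real \<Rightarrow> (real \<Rightarrow> real ^ 'n) \<Rightarrow> real" where
  "TP q u = (1 / q) * (LINT z : {0..1} \<times> {0..1} | lborel.
     (let x = fst z; y = snd z in
       wedge_norm (dcurve u y) (u x - u y) powr q / norm (u x - u y) powr (2 * q)))"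

definition TP_cl :: "real \<Rightarrow> (real \<Rightarrow> real ^ 'n) \<Rightarrow> real" where
  "TP_cl q u = (1 / q) * (LINT z : {0..1} \<times> {0..1} | lborel.
     (let x = fst z; y = snd z in
       norm (proj_perp (dcurve u y) (u x - u y)) powr q / norm (u x - u y) powr (2 * q)
         * norm (dcurve u x) * norm (dcurve u y)))"

definition bil :: "(real \<Rightarrow> real ^ 'n) \<Rightarrow> real" where
  "bil u = (SUP z \<in> {(x, y). x \<in> {0..<1} \<and> y \<in> {0..<1} \<and> x \<noteq> y}.
              circ_dist (fst z) (snd z) / norm (u (fst z) - u (snd z)))"

end

theory Submission
  imports Defs
begin


lemma round_add_int: "round (t + of_int k :: real) = round t + k"
  unfolding round_def by (metis add.commute add.left_commute floor_add_int)

lemma circ_dist_shift: "circ_dist (x + of_int k) y = circ_dist x y"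
  "circ_dist x (y + of_int k) = circ_dist x y"
proof -
  have e: "round (x + of_int k - y) = round (x - y) + k" using round_add_int[of "x-y" k]
    by (simp add: algebra_simps)
  show "circ_dist (x + of_int k) y = circ_dist x y" unfolding circ_dist_def
    by (simp add: e algebra_simps)
  have e2: "round (x - (y + of_int k)) = round (x - y) + (-k)" using round_add_int[of "x-y" "-k"]
    by (simp add: algebra_simps)
  show "circ_dist x (y + of_int k) = circ_dist x y" unfolding circ_dist_def
    by (simp add: e2 algebra_simps)
qed

lemma circ_dist_le: "circ_dist x y \<le> \<bar>x - y - of_int k\<bar>"
  unfolding circ_dist_def using round_diff_minimal[of "x - y" k] by simp

lemma circ_dist_le_half: "circ_dist x y \<le> 1/2"
  unfolding circ_dist_def using of_int_round_abs_le[of "x - y"] by linarith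

lemma circ_dist_nonneg: "circ_dist x y \<ge> 0"
  unfolding circ_dist_def by simp

lemma circ_dist_small: assumes "\<bar>x - y\<bar> \<le> 1/2" shows "circ_dist x y = \<bar>x - y\<bar>"
proof -
  have a: "circ_dist x y \<le> \<bar>x - y\<bar>" using circ_dist_le[of x y 0] by simp
  show ?thesis
  proof (cases "round (x - y) = 0")
    case True then show ?thesis by (simp add: circ_dist_def)
  next
    case False
    then have "\<bar>real_of_int (round (x - y))\<bar> \<ge> 1" by linarith
    then have "circ_dist x y \<ge> 1/2" unfolding circ_dist_def using assms by linarith
    then show ?thesis using a assms by linarith
  qed
qed

lemma circ_dist_zero: "circ_dist x y = 0 \<longleftrightarrow> x - y = of_int (round (x - y))"
  unfolding circ_dist_def by auto

lemma periodic_int: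
  assumes "\<And>x. f (x + 1) = f x" shows "f (x + of_int k) = f x"
proof -
  have pos: "f (x + of_nat n) = f x" for x n
  proof (induction n)
    case (Suc n)
    have "f (x + of_nat (Suc n)) = f (x + of_nat n + 1)" by (simp add: algebra_simps)
    then show ?case using Suc assms by simp
  qed simp
  show ?thesis
  proof (cases "k \<ge> 0")
    case True then show ?thesis using pos[of x "nat k"] by simp
  next
    case False
    have "f (x + of_int k) = f (x + of_int k + of_nat (nat (-k)))" using pos by metis
    also have "\<dots> = f x" using False by simp
    finally show ?thesis .
  qed
qed

lemma periodic_frac:
  assumes "\<And>x. f (x + 1) = f x" shows "f (frac x) = f x"
  using periodic_int[of f "frac x" "\<lfloor>x\<rfloor>", OF assms] by (simp add: frac_def)



locale pcurve =
  fixes u :: "real \<Rightarrow> real ^ 'n"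
  assumes per: "\<And>x. u (x + 1) = u x" and C1: "u C1_differentiable_on UNIV"
begin

abbreviation "v \<equiv> dcurve u"

lemma deriv: "(u has_vector_derivative v x) (at x)"
  and contv: "continuous_on UNIV v"
proof -
  obtain D where D: "\<And>x. (u has_vector_derivative D x) (at x)" "continuous_on UNIV D"
    using C1 unfolding C1_differentiable_on_def by auto
  have "v = D" using D(1) by (auto simp: dcurve_def vector_derivative_at fun_eq_iff)
  then show "(u has_vector_derivative v x) (at x)" "continuous_on UNIV v" using D by auto
qed

lemma isCont_v: "isCont v x"
  using contv by (simp add: continuous_on_eq_continuous_at)

lemma vper: "v (x + 1) = v x"
proof -
  have "((\<lambda>x. u (x + 1)) has_vector_derivative v (x + 1)) (at x)"
  proof -
    have "((\<lambda>x. x + 1) has_vector_derivative 1) (at x)"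
      by (auto intro!: derivative_eq_intros)
    from vector_diff_chain_at[OF this deriv[of "x+1"]] show ?thesis by (simp add: o_def)
  qed
  then have "(u has_vector_derivative v (x + 1)) (at x)" using per by simp
  then show ?thesis using deriv[of x] vector_derivative_unique_at by blast
qed

lemma uper_int: "u (x + of_int k) = u x" using periodic_int[of u, OF per] .
lemma vper_int: "v (x + of_int k) = v x" using periodic_int[of v, OF vper] .

lemma ftc: "((\<lambda>t. h *\<^sub>R v (y + t * h)) has_integral (u (y + h) - u y)) {0..1}"
proof -
  have "((\<lambda>t. u (y + t * h)) has_vector_derivative h *\<^sub>R v (y + t * h)) (at t within {0..1})" for t
  proof -
    have "((\<lambda>t. y + t * h) has_vector_derivative h) (at t)"
      by (auto intro!: derivative_eq_intros)
    from vector_diff_chain_at[OF this deriv[of "y + t * h"]]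
    show ?thesis by (simp add: o_def has_vector_derivative_at_within)
  qed
  from fundamental_theorem_of_calculus[of 0 1, OF _ this] show ?thesis by simp
qed

lemma u_delta: "u x = u (y + ((x - y) - of_int (round (x - y))))"
proof -
  have "u (y + ((x - y) - of_int (round (x - y)))) = u (y + ((x - y) - of_int (round (x - y))) + of_int (round (x - y)))"
    by (rule uper_int[symmetric])
  then show ?thesis by simp
qed

end

lemma proj_perp_self: "proj_perp c c = 0"
  by (cases "c = 0") (auto simp: proj_perp_def)

lemma linear_proj_perp: "linear (proj_perp c)"
  unfolding proj_perp_def
  by (rule linearI) (auto simp: inner_add_left algebra_simps add_divide_distrib scaleR_add_left)

lemma orth_aux: fixes p c :: "'a::real_inner" assumes "p \<bullet> c = 0"
  shows "(p + a *\<^sub>R c) \<bullet> (p + a *\<^sub>R c) = p \<bullet> p + a^2 * (c \<bullet> c)"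
  using assms by (simp add: inner_add_left inner_add_right inner_commute power2_eq_square)

lemma norm_proj_perp_le: "norm (proj_perp c z) \<le> norm z"
proof (cases "c = 0")
  case True then show ?thesis by (simp add: proj_perp_def)
next
  case False
  let ?a = "(z \<bullet> c) / (c \<bullet> c)"
  have cc: "c \<bullet> c > 0" using False by simp
  have orth: "proj_perp c z \<bullet> c = 0" using cc by (simp add: proj_perp_def inner_diff_left)
  have z: "z = proj_perp c z + ?a *\<^sub>R c" by (simp add: proj_perp_def)
  have "norm z ^ 2 = (proj_perp c z + ?a *\<^sub>R c) \<bullet> (proj_perp c z + ?a *\<^sub>R c)"
    using z by (metis power2_norm_eq_inner)
  also have "\<dots> = norm (proj_perp c z) ^ 2 + (?a)^2 * (c \<bullet> c)"
    using orth_aux[OF orth, of ?a] by (simp add: power2_norm_eq_inner)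
  finally have "norm z ^ 2 = norm (proj_perp c z) ^ 2 + (?a)^2 * (c \<bullet> c)" .
  then have "norm (proj_perp c z) ^ 2 \<le> norm z ^ 2" using cc by (simp add: add_nonneg_nonneg)
  then show ?thesis by (simp add: power2_le_iff_abs_le) 
qed

lemma wedge_norm_eq: "wedge_norm c z = norm c * norm (proj_perp c z)"
proof (cases "c = 0")
  case True then show ?thesis by (simp add: wedge_norm_def)
next
  case False
  let ?a = "(z \<bullet> c) / (c \<bullet> c)"
  have cc: "c \<bullet> c > 0" using False by simp
  have "(norm c * norm (proj_perp c z))^2 = (c \<bullet> c) * (proj_perp c z \<bullet> proj_perp c z)"
    by (simp add: power_mult_distrib power2_norm_eq_inner)
  also have "\<dots> = (c \<bullet> c) * (z \<bullet> z) - (c \<bullet> z) * (z \<bullet> c)"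
    using cc by (simp add: proj_perp_def inner_diff_left inner_diff_right inner_commute field_simps power2_eq_square)
  finally have "wedge_norm c z = sqrt ((norm c * norm (proj_perp c z))^2)"
    by (simp add: wedge_norm_def)
  then show ?thesis by simp
qed



lemma tangent_powr:
  fixes s m q :: real assumes "s \<ge> 0" "m \<ge> 0" "q \<ge> 1"
  shows "m powr q + q * m powr (q - 1) * (s - m) \<le> s powr q"
proof (cases "m = 0")
  case True then show ?thesis by simp
next
  case False
  then have m: "m > 0" using assms by simp
  show ?thesis
  proof (cases "s = 0")
    case True
    have "m powr (q - 1) * m = m powr q" using m by (simp add: powr_diff)
    then have "m powr q + q * m powr (q - 1) * (s - m) = (1 - q) * m powr q"
      using True by (simp add: algebra_simps)
    also have "\<dots> \<le> 0" using assms by (simp add: mult_nonpos_nonneg)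
    finally show ?thesis using True by simp
  next
    case False
    then have s: "s \<in> {0<..}" using assms by simp
    have "(\<lambda>x. x powr q) s - (\<lambda>x. x powr q) m \<ge> q * m powr (q - 1) * (s - m)"
      by (rule convex_on_imp_above_tangent[OF powr_convex[OF assms(3)]])
         (use m s in \<open>auto simp: interior_open intro: has_field_derivative_at_within has_real_derivative_powr\<close>)
    then show ?thesis by simp
  qed
qed

lemma jensen_powr:
  fixes g :: "real \<Rightarrow> real" and q :: real
  assumes cg: "continuous_on {0..1} g" and g0: "\<And>t. t \<in> {0..1} \<Longrightarrow> g t \<ge> 0" and q: "q \<ge> 1"
  shows "(integral {0..1} g) powr q \<le> integral {0..1} (\<lambda>t. g t powr q)"
proof -
  define m where "m = integral {0..1} g"
  have gi: "(g has_integral m) {0..1}" unfolding m_def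
    using integrable_continuous_interval[OF cg] by (simp add: integrable_integral)
  have m0: "m \<ge> 0" using has_integral_nonneg[OF gi] g0 by auto
  have cgq: "continuous_on {0..1} (\<lambda>t. g t powr q)"
    using g0 q by (intro continuous_on_powr' cg continuous_on_const) auto
  let ?K = "q * m powr (q - 1)"
  have "((\<lambda>t. m powr q + ?K * (g t - m)) has_integral (m powr q + ?K * (m - m))) {0..1}"
  proof -
    have c1: "((\<lambda>t::real. m powr q) has_integral m powr q) {0..1}"
      using has_integral_const_real[of "m powr q" 0 1] by simp
    have c2: "((\<lambda>t::real. m) has_integral m) {0..1}"
      using has_integral_const_real[of m 0 1] by simp
    have "((\<lambda>t. g t - m) has_integral (m - m)) {0..1}"
      by (rule has_integral_diff[OF gi c2])
    then have "((\<lambda>t. ?K * (g t - m)) has_integral ?K * (m - m)) {0..1}"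
      by (rule has_integral_mult_right)
    from has_integral_add[OF c1 this] show ?thesis by simp
  qed
  then have li: "((\<lambda>t. m powr q + ?K * (g t - m)) has_integral m powr q) {0..1}" by simp
  have "m powr q \<le> integral {0..1} (\<lambda>t. g t powr q)"
    using has_integral_le[OF li integrable_integral[OF integrable_continuous_interval[OF cgq]]]
      tangent_powr[OF g0 m0 q] by auto
  then show ?thesis unfolding m_def .
qed

context pcurve begin

lemma cont_g: "continuous_on S (\<lambda>t. norm (v (y + t * h) - v y))"
  by (intro continuous_intros continuous_on_compose2[OF contv]) auto

lemma proj_bound:
  fixes x y :: real
  defines "\<delta> \<equiv> (x - y) - of_int (round (x - y))"
  shows "norm (proj_perp (v y) (u x - u y)) \<le> circ_dist x y * integral {0..1} (\<lambda>t. norm (v (y + t * \<delta>) - v y))"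
proof -
  let ?c = "v y"
  let ?P = "proj_perp ?c"
  have bl: "bounded_linear ?P" using linear_proj_perp linear_conv_bounded_linear by blast
  have "((\<lambda>t. \<delta> *\<^sub>R v (y + t * \<delta>)) has_integral (u x - u y)) {0..1}"
    using ftc[of \<delta> y] u_delta[of x y] unfolding \<delta>_def by simp
  from has_integral_linear[OF this bl]
  have I: "((\<lambda>t. ?P (\<delta> *\<^sub>R v (y + t * \<delta>))) has_integral ?P (u x - u y)) {0..1}"
    by (simp add: o_def)
  have eq: "?P (\<delta> *\<^sub>R v (y + t * \<delta>)) = \<delta> *\<^sub>R ?P (v (y + t * \<delta>) - ?c)" for t
    using linear_proj_perp[of ?c] proj_perp_self[of ?c]
    by (simp add: linear_cmul linear_diff)
  define g where "g = (\<lambda>t. norm (v (y + t * \<delta>) - v y))"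
  have cg: "continuous_on {0..1} g" unfolding g_def by (rule cont_g)
  have gi: "(g has_integral integral {0..1} g) {0..1}"
    using integrable_continuous_interval[OF cg] by (simp add: integrable_integral)
  have gi2: "((\<lambda>t. \<bar>\<delta>\<bar> * g t) has_integral \<bar>\<delta>\<bar> * integral {0..1} g) {0..1}"
    by (rule has_integral_mult_right[OF gi])
  have "norm (integral {0..1} (\<lambda>t. ?P (\<delta> *\<^sub>R v (y + t * \<delta>)))) \<le> integral {0..1} (\<lambda>t. \<bar>\<delta>\<bar> * g t)"
  proof (rule integral_norm_bound_integral)
    show "(\<lambda>t. ?P (\<delta> *\<^sub>R v (y + t * \<delta>))) integrable_on {0..1}" using I by blast
    show "(\<lambda>t. \<bar>\<delta>\<bar> * g t) integrable_on {0..1}" using gi2 by blast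
    fix t show "norm (?P (\<delta> *\<^sub>R v (y + t * \<delta>))) \<le> \<bar>\<delta>\<bar> * g t"
      unfolding eq g_def using norm_proj_perp_le[of ?c "v (y + t * \<delta>) - ?c"]
      by (simp add: mult_left_mono)
  qed
  then have "norm (?P (u x - u y)) \<le> \<bar>\<delta>\<bar> * integral {0..1} g"
    using integral_unique[OF I] integral_unique[OF gi2] by simp
  moreover have "\<bar>\<delta>\<bar> = circ_dist x y" unfolding \<delta>_def circ_dist_def ..
  ultimately show ?thesis unfolding g_def by simp
qed

end


locale acurve = pcurve u for u :: "real \<Rightarrow> real ^ 'n" +
  fixes c0 :: real
  assumes inj: "inj_on u {0..<1}" and c0: "c0 > 0" and vlow: "\<And>x. norm (dcurve u x) \<ge> c0"
begin

lemma contu: "continuous_on UNIV u"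
proof -
  have "isCont u x" for x using deriv[of x] by (rule has_vector_derivative_continuous)
  then show ?thesis by (simp add: continuous_at_imp_continuous_on)
qed

lemma unif_v:
  assumes "\<epsilon> > 0" shows "\<exists>\<eta>>0. \<forall>s s'. \<bar>s - s'\<bar> \<le> \<eta> \<longrightarrow> norm (v s - v s') \<le> \<epsilon>"
proof -
  have "uniformly_continuous_on {-1..2} v"
    by (rule compact_uniformly_continuous) (auto intro: continuous_on_subset[OF contv])
  then obtain \<eta>0 where \<eta>0: "\<eta>0 > 0" and H: "\<And>s s'. s \<in> {-1..2} \<Longrightarrow> s' \<in> {-1..2} \<Longrightarrow> dist s' s < \<eta>0 \<Longrightarrow> dist (v s') (v s) < \<epsilon>"
    unfolding uniformly_continuous_on_def using assms by metis
  define \<eta> where "\<eta> = min (\<eta>0/2) (1/2)"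
  have "\<eta> > 0" using \<eta>0 by (simp add: \<eta>_def)
  moreover have "norm (v s - v s') \<le> \<epsilon>" if "\<bar>s - s'\<bar> \<le> \<eta>" for s s'
  proof -
    define k where "k = - \<lfloor>s\<rfloor>"
    have a: "v s = v (s + of_int k)" "v s' = v (s' + of_int k)" using vper_int by auto
    have fl: "real_of_int \<lfloor>s\<rfloor> \<le> s" "s < real_of_int \<lfloor>s\<rfloor> + 1"
      using floor_correct[of s] by simp_all
    have ss: "\<bar>s - s'\<bar> \<le> 1/2" using that by (simp add: \<eta>_def)
    have ss2: "s - s' \<le> 1/2" "s' - s \<le> 1/2" using ss unfolding abs_le_iff by linarith+
    have b: "s + of_int k \<in> {-1..2}" "s' + of_int k \<in> {-1..2}"
      unfolding k_def atLeastAtMost_iff of_int_minus using fl ss2 by linarith+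
    have "dist (s + of_int k) (s' + of_int k) < \<eta>0" using that \<eta>0 unfolding \<eta>_def dist_real_def by auto
    from H[OF b(2) b(1) this] show ?thesis unfolding a by (simp add: dist_norm)
  qed
  ultimately show ?thesis by blast
qed

lemma near_bound:
  obtains \<eta> where "\<eta> > 0" "\<And>x y. circ_dist x y \<le> \<eta> \<Longrightarrow> circ_dist x y * c0 / 2 \<le> norm (u x - u y)"
proof -
  obtain \<eta> where \<eta>: "\<eta> > 0" and H: "\<And>s s'. \<bar>s - s'\<bar> \<le> \<eta> \<Longrightarrow> norm (v s - v s') \<le> c0 / 2"
    using unif_v[of "c0/2"] c0 by auto
  have "circ_dist x y * c0 / 2 \<le> norm (u x - u y)" if d: "circ_dist x y \<le> \<eta>" for x y
  proof -
    define \<delta> where "\<delta> = (x - y) - of_int (round (x - y))"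
    have ad: "\<bar>\<delta>\<bar> = circ_dist x y" unfolding \<delta>_def circ_dist_def ..
    have I: "((\<lambda>t. \<delta> *\<^sub>R v (y + t * \<delta>)) has_integral (u x - u y)) {0..1}"
      using ftc[of \<delta> y] u_delta[of x y] unfolding \<delta>_def by simp
    have I2: "((\<lambda>t::real. \<delta> *\<^sub>R v y) has_integral \<delta> *\<^sub>R v y) {0..1}"
      using has_integral_const_real[of "\<delta> *\<^sub>R v y" 0 1] by simp
    have I3: "((\<lambda>t. \<delta> *\<^sub>R v (y + t * \<delta>) - \<delta> *\<^sub>R v y) has_integral (u x - u y - \<delta> *\<^sub>R v y)) (cbox 0 1)"
      using has_integral_diff[OF I I2] by simp
    have "norm (u x - u y - \<delta> *\<^sub>R v y) \<le> (\<bar>\<delta>\<bar> * (c0 / 2))"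
    proof (rule has_integral_bound[OF _ I3, THEN order_trans], goal_cases)
      show "0 \<le> \<bar>\<delta>\<bar> * (c0 / 2)" using c0 by simp
      fix t :: real assume "t \<in> cbox 0 1"
      then have t: "0 \<le> t" "t \<le> 1" by auto
      have "\<bar>t * \<delta>\<bar> \<le> \<bar>\<delta>\<bar>" using t by (simp add: abs_mult mult_left_le_one_le)
      then have "\<bar>(y + t * \<delta>) - y\<bar> \<le> \<eta>" using d ad by simp
      then have "norm (v (y + t * \<delta>) - v y) \<le> c0 / 2" by (rule H)
      then have "\<bar>\<delta>\<bar> * norm (v (y + t * \<delta>) - v y) \<le> \<bar>\<delta>\<bar> * (c0 / 2)"
        by (rule mult_left_mono) simp
      moreover have "norm (\<delta> *\<^sub>R v (y + t * \<delta>) - \<delta> *\<^sub>R v y) = \<bar>\<delta>\<bar> * norm (v (y + t * \<delta>) - v y)"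
        by (simp add: scaleR_diff_right[symmetric])
      ultimately show "norm (\<delta> *\<^sub>R v (y + t * \<delta>) - \<delta> *\<^sub>R v y) \<le> \<bar>\<delta>\<bar> * (c0 / 2)"
        by simp
    qed simp
    then have e: "norm (u x - u y - \<delta> *\<^sub>R v y) \<le> \<bar>\<delta>\<bar> * (c0 / 2)" by simp
    have "\<bar>\<delta>\<bar> * c0 \<le> norm (\<delta> *\<^sub>R v y)" using vlow[of y] by (simp add: mult_left_mono)
    moreover have "norm (\<delta> *\<^sub>R v y) \<le> norm (u x - u y) + norm (u x - u y - \<delta> *\<^sub>R v y)"
      using norm_triangle_sub[of "\<delta> *\<^sub>R v y" "u x - u y"] norm_minus_commute[of "\<delta> *\<^sub>R v y" "u x - u y"] by simp
    ultimately show ?thesis using e ad by simp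
  qed
  with \<eta> that show ?thesis by blast
qed

lemma far_bound:
  assumes "\<eta> > 0"
  obtains m where "m > 0" "\<And>x y. x \<in> {0..1} \<Longrightarrow> y \<in> {0..1} \<Longrightarrow> \<eta> \<le> \<bar>x - y\<bar> \<Longrightarrow> \<eta> \<le> \<bar>x - y - 1\<bar> \<Longrightarrow> \<eta> \<le> \<bar>x - y + 1\<bar> \<Longrightarrow> m \<le> norm (u x - u y)"
proof -
  define C where "C = ({0..1} \<times> {0..1}) \<inter> {z::real\<times>real. \<eta> \<le> \<bar>fst z - snd z\<bar>} \<inter> {z. \<eta> \<le> \<bar>fst z - snd z - 1\<bar>} \<inter> {z. \<eta> \<le> \<bar>fst z - snd z + 1\<bar>}"
  have cC: "compact C" unfolding C_def
    by (intro compact_Int_closed compact_Times compact_Icc closed_Collect_le continuous_intros)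
  have pos: "u x \<noteq> u y" if "(x, y) \<in> C" for x y
  proof
    assume eq: "u x = u y"
    have x: "x \<in> {0..1}" "y \<in> {0..1}" using that by (auto simp: C_def)
    have "u (frac x) = u (frac y)" using eq periodic_frac[of u, OF per] by simp
    then have "frac x = frac y" by (rule inj_onD[OF inj]) (auto simp: frac_lt_1)
    then have "x - y = of_int (\<lfloor>x\<rfloor> - \<lfloor>y\<rfloor>)" by (simp add: frac_def)
    moreover have "\<lfloor>x\<rfloor> \<in> {0,1}" "\<lfloor>y\<rfloor> \<in> {0,1}" using x
      by (auto simp: floor_eq_iff)
    ultimately have "x - y = 0 \<or> x - y = 1 \<or> x - y = -1" by auto
    then show False using that assms by (auto simp: C_def)
  qed
  show ?thesis
  proof (cases "C = {}")
    case True
    show ?thesis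
    proof (rule that[of 1])
      fix x y :: real
      assume "x \<in> {0..1}" "y \<in> {0..1}" "\<eta> \<le> \<bar>x - y\<bar>" "\<eta> \<le> \<bar>x - y - 1\<bar>" "\<eta> \<le> \<bar>x - y + 1\<bar>"
      then have "(x, y) \<in> C" by (simp add: C_def)
      then show "1 \<le> norm (u x - u y)" using True by simp
    qed simp
  next
    case False
    have cf: "continuous_on C (\<lambda>z. norm (u (fst z) - u (snd z)))"
      by (intro continuous_intros continuous_on_compose2[OF contu]) auto
    obtain z0 where z0: "z0 \<in> C" "\<And>z. z \<in> C \<Longrightarrow> norm (u (fst z0) - u (snd z0)) \<le> norm (u (fst z) - u (snd z))"
      using continuous_attains_inf[OF cC False cf] by auto
    have "norm (u (fst z0) - u (snd z0)) > 0" using pos[of "fst z0" "snd z0"] z0(1) by simp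
    then show ?thesis
    proof (rule that)
      fix x y :: real
      assume "x \<in> {0..1}" "y \<in> {0..1}" "\<eta> \<le> \<bar>x - y\<bar>" "\<eta> \<le> \<bar>x - y - 1\<bar>" "\<eta> \<le> \<bar>x - y + 1\<bar>"
      then have "(x, y) \<in> C" by (simp add: C_def)
      from z0(2)[OF this] show "norm (u (fst z0) - u (snd z0)) \<le> norm (u x - u y)" by simp
    qed
  qed
qed

lemma bilip: obtains M where "M > 0" "\<And>x y. circ_dist x y \<le> M * norm (u x - u y)"
proof -
  obtain \<eta> where \<eta>: "\<eta> > 0" and N: "\<And>x y. circ_dist x y \<le> \<eta> \<Longrightarrow> circ_dist x y * c0 / 2 \<le> norm (u x - u y)"
    using near_bound by blast
  obtain m where m: "m > 0" and F: "\<And>x y. x \<in> {0..1} \<Longrightarrow> y \<in> {0..1} \<Longrightarrow> \<eta> \<le> \<bar>x - y\<bar> \<Longrightarrow> \<eta> \<le> \<bar>x - y - 1\<bar> \<Longrightarrow> \<eta> \<le> \<bar>x - y + 1\<bar> \<Longrightarrow> m \<le> norm (u x - u y)"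
    using far_bound[OF \<eta>] by blast
  define M where "M = 2 / c0 + 1 / (2 * m)"
  have M: "M > 0" using c0 m by (simp add: M_def add_pos_pos)
  have "circ_dist x y \<le> M * norm (u x - u y)" for x y
  proof (cases "circ_dist x y \<le> \<eta>")
    case True
    from N[OF True] have "circ_dist x y \<le> (2 / c0) * norm (u x - u y)" using c0 by (simp add: field_simps)
    also have "\<dots> \<le> M * norm (u x - u y)" unfolding M_def distrib_right using m by simp
    finally show ?thesis .
  next
    case False
    define x' where "x' = frac x"
    define y' where "y' = frac y"
    have cd: "circ_dist x' y' = circ_dist x y"
      using circ_dist_shift(1)[of x "-\<lfloor>x\<rfloor>" y] circ_dist_shift(2)[of "frac x" y "-\<lfloor>y\<rfloor>"]
      by (simp add: x'_def y'_def frac_def)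
    have uu: "u x' = u x" "u y' = u y" using periodic_frac[of u, OF per] by (auto simp: x'_def y'_def)
    have xy: "x' \<in> {0..1}" "y' \<in> {0..1}" using less_imp_le[OF frac_lt_1] frac_ge_0 by (auto simp: x'_def y'_def)
    have "m \<le> norm (u x' - u y')"
      apply (rule F[OF xy])
      using False cd circ_dist_le[of x' y' 0] circ_dist_le[of x' y' 1] circ_dist_le[of x' y' "-1"] by auto
    then have mw: "m \<le> norm (u x - u y)" using uu by simp
    have "circ_dist x y \<le> 1 / 2" by (rule circ_dist_le_half)
    also have "\<dots> \<le> (1 / (2 * m)) * norm (u x - u y)" using mw m by (simp add: field_simps)
    also have "\<dots> \<le> M * norm (u x - u y)" unfolding M_def distrib_right using c0 by simp
    finally show ?thesis .
  qed
  with M that show ?thesis by blast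
qed

lemma bil_bound:
  assumes "circ_dist x y > 0"
  shows "circ_dist x y / norm (u x - u y) \<le> bil u" "u x \<noteq> u y"
proof -
  obtain M where M: "M > 0" "\<And>x y. circ_dist x y \<le> M * norm (u x - u y)" using bilip by blast
  define S where "S = {(x, y). x \<in> {0..<1} \<and> y \<in> {0..<1} \<and> x \<noteq> (y::real)}"
  have bdd: "bdd_above ((\<lambda>z. circ_dist (fst z) (snd z) / norm (u (fst z) - u (snd z))) ` S)"
  proof (rule bdd_aboveI2)
    fix z :: "real \<times> real"
    show "circ_dist (fst z) (snd z) / norm (u (fst z) - u (snd z)) \<le> M"
      using M(2)[of "fst z" "snd z"] M(1) by (cases "norm (u (fst z) - u (snd z)) = 0") (auto simp: field_simps)
  qed
  show "u x \<noteq> u y" using M(2)[of x y] assms by auto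
  define x' where "x' = frac x"
  define y' where "y' = frac y"
  have cd: "circ_dist x' y' = circ_dist x y"
    using circ_dist_shift(1)[of x "-\<lfloor>x\<rfloor>" y] circ_dist_shift(2)[of "frac x" y "-\<lfloor>y\<rfloor>"]
    by (simp add: x'_def y'_def frac_def)
  have uu: "u x' = u x" "u y' = u y" using periodic_frac[of u, OF per] by (auto simp: x'_def y'_def)
  have "x' \<noteq> y'"
  proof
    assume "x' = y'"
    then have "x' - y' = of_int (round (x' - y'))" by simp
    then have "circ_dist x' y' = 0" by (simp add: circ_dist_def)
    then show False using cd assms by simp
  qed
  then have "(x', y') \<in> S" using frac_lt_1 frac_ge_0 by (auto simp: S_def x'_def y'_def)
  from cSUP_upper[OF this bdd] show "circ_dist x y / norm (u x - u y) \<le> bil u"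
    unfolding bil_def S_def[symmetric] using cd uu by simp
qed

end


definition dl :: "real \<Rightarrow> real \<Rightarrow> real" where
  "dl x y = x - y - real_of_int (round (x - y))"

definition Kf :: "(real \<Rightarrow> real ^ 'n) \<Rightarrow> real \<Rightarrow> real \<Rightarrow> real \<Rightarrow> real \<Rightarrow> real" where
  "Kf w q y h t = norm (w (y + t * h) - w y) powr q / \<bar>h\<bar> powr q"

definition Lf :: "(real \<Rightarrow> real ^ 'n) \<Rightarrow> real \<Rightarrow> real \<Rightarrow> real \<Rightarrow> real" where
  "Lf w q y r = norm (w (y + r) - w y) powr q / \<bar>r\<bar> powr q"

lemma measurable_round_real[measurable]: "(\<lambda>x::real. real_of_int (round x)) \<in> borel_measurable borel"
  unfolding round_def by measurable

lemma meas_test: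
  fixes w :: "real \<Rightarrow> real ^ 'n"
  assumes [measurable]: "w \<in> borel_measurable borel"
  shows "(\<lambda>(z, t::real). ennreal (indicator {0..1} t * Kf w q (snd z) (dl (fst z) (snd z)) t)) \<in> borel_measurable ((lborel \<Otimes>\<^sub>M lborel) \<Otimes>\<^sub>M lborel)"
  unfolding Kf_def dl_def by measurable

lemma per_shift:
  fixes f :: "real \<Rightarrow> ennreal"
  assumes [measurable]: "f \<in> borel_measurable borel" and per: "\<And>x. f (x + 1) = f x"
  shows "(\<integral>\<^sup>+x. indicator {a..<a+1} x * f x \<partial>lborel) = (\<integral>\<^sup>+x. indicator {0..<1} x * f x \<partial>lborel)"
proof -
  define n where "n = real_of_int \<lfloor>a\<rfloor>"
  define b where "b = a - n"
  have b: "0 \<le> b" "b < 1" unfolding b_def n_def using frac_lt_1[of a] by (simp_all add: frac_def)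
  have fn: "f (n + x) = f x" for x using periodic_int[of f, OF per, of x "\<lfloor>a\<rfloor>"] by (simp add: n_def add.commute)
  have "(\<integral>\<^sup>+x. indicator {a..<a+1} x * f x \<partial>lborel) = (\<integral>\<^sup>+x. indicator {a..<a+1} (n + 1 * x) * f (n + 1 * x) \<partial>lborel)"
    using nn_integral_real_affine[of "\<lambda>x. indicator {a..<a+1} x * f x" 1 n] by simp
  also have "\<dots> = (\<integral>\<^sup>+x. indicator {b..<b+1} x * f x \<partial>lborel)"
    by (intro nn_integral_cong) (auto simp: fn b_def indicator_def)
  also have "\<dots> = (\<integral>\<^sup>+x. indicator {b..<1} x * f x + indicator {1..<b+1} x * f x \<partial>lborel)"
    using b by (intro nn_integral_cong) (auto simp: indicator_def)
  also have "\<dots> = (\<integral>\<^sup>+x. indicator {b..<1} x * f x \<partial>lborel) + (\<integral>\<^sup>+x. indicator {1..<b+1} x * f x \<partial>lborel)"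
    by (rule nn_integral_add) auto
  also have "(\<integral>\<^sup>+x. indicator {1..<b+1} x * f x \<partial>lborel) = (\<integral>\<^sup>+x. indicator {1..<b+1} (1 + 1 * x) * f (1 + 1 * x) \<partial>lborel)"
    using nn_integral_real_affine[of "\<lambda>x. indicator {1..<b+1} x * f x" 1 1] by simp
  also have "\<dots> = (\<integral>\<^sup>+x. indicator {0..<b} x * f x \<partial>lborel)"
    by (intro nn_integral_cong) (auto simp: per[unfolded add.commute[of _ 1]] indicator_def)
  also have "(\<integral>\<^sup>+x. indicator {b..<1} x * f x \<partial>lborel) + (\<integral>\<^sup>+x. indicator {0..<b} x * f x \<partial>lborel)
      = (\<integral>\<^sup>+x. indicator {b..<1} x * f x + indicator {0..<b} x * f x \<partial>lborel)"
    by (rule nn_integral_add[symmetric]) auto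
  also have "\<dots> = (\<integral>\<^sup>+x. indicator {0..<1} x * f x \<partial>lborel)"
    using b by (intro nn_integral_cong) (auto simp: indicator_def)
  finally show ?thesis .
qed

lemma closed_open_ae:
  fixes f :: "real \<Rightarrow> ennreal"
  shows "(\<integral>\<^sup>+x. indicator {a..b} x * f x \<partial>lborel) = (\<integral>\<^sup>+x. indicator {a..<b} x * f x \<partial>lborel)"
  by (intro nn_integral_cong_AE eventually_mono[OF AE_lborel_singleton[of b]]) (auto simp: indicator_def)

lemma prod_split:
  fixes H :: "real \<times> real \<Rightarrow> ennreal"
  assumes [measurable]: "H \<in> borel_measurable (lborel \<Otimes>\<^sub>M lborel)"
  shows "(\<integral>\<^sup>+z. indicator ({0..1} \<times> {0..1}) z * H z \<partial>lborel)
     = (\<integral>\<^sup>+y. indicator {0..1} y * (\<integral>\<^sup>+x. indicator {0..1} x * H (x, y) \<partial>lborel) \<partial>lborel)"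
proof -
  have "(\<integral>\<^sup>+z. indicator ({0..1} \<times> {0..1}) z * H z \<partial>lborel)
      = (\<integral>\<^sup>+z. indicator ({0..1} \<times> {0..1}) z * H z \<partial>(lborel \<Otimes>\<^sub>M lborel))"
    by (simp add: lborel_prod)
  also have "\<dots> = (\<integral>\<^sup>+y. (\<integral>\<^sup>+x. indicator ({0..1} \<times> {0..1}) (x, y) * H (x, y) \<partial>lborel) \<partial>lborel)"
    by (rule lborel_pair.nn_integral_snd[symmetric]) measurable
  also have "\<dots> = (\<integral>\<^sup>+y. indicator {0..1} y * (\<integral>\<^sup>+x. indicator {0..1} x * H (x, y) \<partial>lborel) \<partial>lborel)"
    by (intro nn_integral_cong) (auto simp: indicator_def)
  finally show ?thesis .
qed



lemma ind_ennreal: "ennreal (indicator S x * r) = indicator S x * ennreal r"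
  by (simp add: indicator_def)

lemma dl_per: "dl (x + 1) y = dl x y"
proof -
  have "round (x + 1 - y) = round (x - y) + 1" using round_add_int[of "x - y" 1] by (simp add: algebra_simps)
  then show ?thesis by (simp add: dl_def)
qed

lemma dl_small: assumes "h \<in> {-1/2..<1/2}" shows "dl (y + h) y = h"
proof -
  have "round h = 0" unfolding round_def using assms by (simp add: floor_eq_iff)
  then show ?thesis by (simp add: dl_def)
qed

locale wq =
  fixes w :: "real \<Rightarrow> real ^ 'n" and q :: real
  assumes contw: "continuous_on UNIV w" and perw: "\<And>x. w (x + 1) = w x" and q: "q > 1"
begin

lemma measw[measurable]: "w \<in> borel_measurable borel"
  using contw by (rule borel_measurable_continuous_onI)

definition "R y = (\<integral>\<^sup>+r. indicator {-1/2..<1/2} r * ennreal (Lf w q y r) \<partial>lborel)"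

lemma F1: "(\<integral>\<^sup>+x. indicator {0..1} x * ennreal (Kf w q y (dl x y) t) \<partial>lborel)
   = (\<integral>\<^sup>+h. indicator {-1/2..<1/2} h * ennreal (Kf w q y h t) \<partial>lborel)"
proof -
  let ?f = "\<lambda>x. ennreal (Kf w q y (dl x y) t)"
  have mf[measurable]: "?f \<in> borel_measurable borel" unfolding Kf_def dl_def by measurable
  have "(\<integral>\<^sup>+x. indicator {0..1} x * ?f x \<partial>lborel) = (\<integral>\<^sup>+x. indicator {0..<1} x * ?f x \<partial>lborel)"
    by (rule closed_open_ae)
  also have "\<dots> = (\<integral>\<^sup>+x. indicator {(y - 1/2)..<(y - 1/2) + 1} x * ?f x \<partial>lborel)"
    by (rule per_shift[symmetric]) (auto simp: dl_per)
  also have "\<dots> = (\<integral>\<^sup>+h. indicator {(y - 1/2)..<(y - 1/2) + 1} (y + 1 * h) * ?f (y + 1 * h) \<partial>lborel)"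
    using nn_integral_real_affine[of "\<lambda>x. indicator {(y - 1/2)..<(y - 1/2) + 1} x * ?f x" 1 y] by simp
  also have "\<dots> = (\<integral>\<^sup>+h. indicator {-1/2..<1/2} h * ennreal (Kf w q y h t) \<partial>lborel)"
    by (intro nn_integral_cong) (auto simp: indicator_def dl_small)
  finally show ?thesis .
qed

lemma K_zero_t: "Kf w q y h 0 = 0"
  by (simp add: Kf_def)

lemma F2: assumes t: "t \<in> {0..1}"
  shows "(\<integral>\<^sup>+h. indicator {-1/2..<1/2} h * ennreal (Kf w q y h t) \<partial>lborel) \<le> ennreal (t powr (q - 1)) * R y"
proof (cases "t = 0")
  case True then show ?thesis by (simp add: K_zero_t)
next
  case False
  then have t0: "t > 0" using t by simp
  let ?F = "\<lambda>r. indicator {-t/2..<t/2} r * ennreal (t powr q * Lf w q y r)"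
  have mF[measurable]: "?F \<in> borel_measurable borel" unfolding Lf_def by measurable
  have "(\<integral>\<^sup>+r. ?F r \<partial>lborel) = ennreal \<bar>t\<bar> * (\<integral>\<^sup>+h. ?F (0 + t * h) \<partial>lborel)"
    using nn_integral_real_affine[OF mF, of t 0] t0 by simp
  also have "(\<integral>\<^sup>+h. ?F (0 + t * h) \<partial>lborel) = (\<integral>\<^sup>+h. indicator {-1/2..<1/2} h * ennreal (Kf w q y h t) \<partial>lborel)"
  proof (intro nn_integral_cong)
    fix h
    have i: "indicator {-t/2..<t/2} (t * h) = (indicator {-1/2..<1/2} h :: ennreal)"
    proof -
      have a: "-t/2 \<le> t*h \<longleftrightarrow> -1/2 \<le> h" using mult_le_cancel_left_pos[OF t0, of "-1/2" h] by simp
      have b: "t*h < t/2 \<longleftrightarrow> h < 1/2" using mult_less_cancel_left_pos[OF t0, of h "1/2"] by simp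
      show ?thesis by (simp only: indicator_def atLeastLessThan_iff a b)
    qed
    have "t powr q * Lf w q y (t * h) = Kf w q y h t"
    proof (cases "h = 0")
      case True then show ?thesis by (simp add: Lf_def Kf_def)
    next
      case False
      have "\<bar>t * h\<bar> powr q = t powr q * \<bar>h\<bar> powr q" using t0 by (simp add: abs_mult powr_mult)
      then show ?thesis using t0 False by (simp add: Lf_def Kf_def mult.commute)
    qed
    then show "?F (0 + t * h) = indicator {-1/2..<1/2} h * ennreal (Kf w q y h t)" using i by simp
  qed
  finally have eq: "(\<integral>\<^sup>+r. ?F r \<partial>lborel) = ennreal t * (\<integral>\<^sup>+h. indicator {-1/2..<1/2} h * ennreal (Kf w q y h t) \<partial>lborel)"
    using t0 by simp
  have "(\<integral>\<^sup>+r. ?F r \<partial>lborel) = (\<integral>\<^sup>+r. ennreal (t powr q) * (indicator {-t/2..<t/2} r * ennreal (Lf w q y r)) \<partial>lborel)"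
  proof (intro nn_integral_cong)
    fix r
    have "ennreal (t powr q * Lf w q y r) = ennreal (t powr q) * ennreal (Lf w q y r)"
      by (rule ennreal_mult') simp
    then show "?F r = ennreal (t powr q) * (indicator {-t/2..<t/2} r * ennreal (Lf w q y r))"
      by (simp add: mult_ac)
  qed
  also have "\<dots> = ennreal (t powr q) * (\<integral>\<^sup>+r. indicator {-t/2..<t/2} r * ennreal (Lf w q y r) \<partial>lborel)"
    by (rule nn_integral_cmult) (unfold Lf_def, measurable)
  also have "\<dots> \<le> ennreal (t powr q) * R y"
    unfolding R_def using t
    by (intro mult_left_mono nn_integral_mono) (auto simp: indicator_def)
  also have "\<dots> = ennreal t * (ennreal (t powr (q - 1)) * R y)"
  proof -
    have "t powr q = t * t powr (q - 1)" using t0 by (simp add: powr_diff)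
    moreover have "ennreal (t * t powr (q - 1)) = ennreal t * ennreal (t powr (q - 1))"
      by (rule ennreal_mult') (use t0 in simp)
    ultimately show ?thesis by (simp add: mult.assoc)
  qed
  finally show ?thesis unfolding eq using t0 by (subst (asm) ennreal_mult_le_mult_iff) auto
qed


definition "Qe x y = (\<integral>\<^sup>+t. ennreal (indicator {0..1} t * Kf w q y (dl x y) t) \<partial>lborel)"

lemma int_powr: "(\<integral>\<^sup>+t. ennreal (indicator {0..1} t * t powr (q - 1)) \<partial>lborel) = ennreal (1 / q)"
proof -
  have "((\<lambda>t. t powr (q - 1)) has_integral (1 powr (q - 1 + 1) / (q - 1 + 1))) {0..1}"
    by (rule has_integral_powr_from_0) (use q in auto)
  then have "((\<lambda>t. t powr (q - 1)) has_integral (1 / q)) {0..1}" by simp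
  from nn_integral_has_integral_lebesgue[OF _ this] show ?thesis by simp
qed

lemma F3: "(\<integral>\<^sup>+x. indicator {0..1} x * Qe x y \<partial>lborel) \<le> ennreal (1 / q) * R y"
proof -
  let ?g = "\<lambda>x t. indicator {0..1} x * ennreal (indicator {0..1} t * Kf w q y (dl x y) t)"
  have mg: "case_prod ?g \<in> borel_measurable (lborel \<Otimes>\<^sub>M lborel)"
    unfolding Kf_def dl_def by measurable
  have "(\<integral>\<^sup>+x. indicator {0..1} x * Qe x y \<partial>lborel) = (\<integral>\<^sup>+x. (\<integral>\<^sup>+t. ?g x t \<partial>lborel) \<partial>lborel)"
    unfolding Qe_def by (intro nn_integral_cong nn_integral_cmult[symmetric]) (unfold Kf_def dl_def, measurable)
  also have "\<dots> = (\<integral>\<^sup>+t. (\<integral>\<^sup>+x. ?g x t \<partial>lborel) \<partial>lborel)"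
    by (rule lborel_pair.Fubini'[symmetric, OF mg])
  also have "\<dots> = (\<integral>\<^sup>+t. indicator {0..1} t * (\<integral>\<^sup>+x. indicator {0..1} x * ennreal (Kf w q y (dl x y) t) \<partial>lborel) \<partial>lborel)"
  proof (intro nn_integral_cong)
    fix t
    have "(\<integral>\<^sup>+x. ?g x t \<partial>lborel) = (\<integral>\<^sup>+x. indicator {0..1} t * (indicator {0..1} x * ennreal (Kf w q y (dl x y) t)) \<partial>lborel)"
      by (intro nn_integral_cong) (simp add: ind_ennreal mult_ac)
    also have "\<dots> = indicator {0..1} t * (\<integral>\<^sup>+x. indicator {0..1} x * ennreal (Kf w q y (dl x y) t) \<partial>lborel)"
      by (rule nn_integral_cmult) (unfold Kf_def dl_def, measurable)
    finally show "(\<integral>\<^sup>+x. ?g x t \<partial>lborel) = indicator {0..1} t * (\<integral>\<^sup>+x. indicator {0..1} x * ennreal (Kf w q y (dl x y) t) \<partial>lborel)" .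
  qed
  also have "\<dots> \<le> (\<integral>\<^sup>+t. ennreal (indicator {0..1} t * t powr (q - 1)) * R y \<partial>lborel)"
  proof (intro nn_integral_mono)
    fix t
    show "indicator {0..1} t * (\<integral>\<^sup>+x. indicator {0..1} x * ennreal (Kf w q y (dl x y) t) \<partial>lborel)
        \<le> ennreal (indicator {0..1} t * t powr (q - 1)) * R y"
    proof (cases "t \<in> {0..1}")
      case True
      then show ?thesis using F2[OF True, of y] by (simp add: F1)
    qed simp
  qed
  also have "\<dots> = (\<integral>\<^sup>+t. ennreal (indicator {0..1} t * t powr (q - 1)) \<partial>lborel) * R y"
    by (rule nn_integral_multc) measurable
  also have "\<dots> = ennreal (1 / q) * R y" by (simp add: int_powr)
  finally show ?thesis .
qed

abbreviation "gagf \<equiv> gag_integrand w (1 - 1 / q) q"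

lemma gag_meas[measurable]: "(\<lambda>z. ennreal (gagf z)) \<in> borel_measurable (lborel \<Otimes>\<^sub>M lborel)"
  unfolding gag_integrand_def circ_dist_def by measurable

lemma F4: "R y = (\<integral>\<^sup>+x. indicator {0..1} x * ennreal (gagf (x, y)) \<partial>lborel)"
proof -
  let ?f = "\<lambda>x. ennreal (gagf (x, y))"
  have mf[measurable]: "?f \<in> borel_measurable borel" unfolding gag_integrand_def circ_dist_def by measurable
  have fper: "?f (x + 1) = ?f x" for x
    using circ_dist_shift(1)[of x 1 y] by (simp add: gag_integrand_def perw)
  have ex: "1 + (1 - 1 / q) * q = q" using q by (simp add: algebra_simps)
  have "R y = (\<integral>\<^sup>+r. indicator {y - 1/2..<(y - 1/2) + 1} (y + 1 * r) * ?f (y + 1 * r) \<partial>lborel)"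
    unfolding R_def
  proof (intro nn_integral_cong)
    fix r
    show "indicator {-1/2..<1/2} r * ennreal (Lf w q y r) = indicator {y - 1/2..<(y - 1/2) + 1} (y + 1 * r) * ?f (y + 1 * r)"
    proof (cases "r \<in> {-1/2..<1/2}")
      case True
      then have "\<bar>(y + r) - y\<bar> \<le> 1/2" by auto
      then have "circ_dist (y + r) y = \<bar>r\<bar>" using circ_dist_small[of "y + r" y] by simp
      then show ?thesis using True by (simp add: indicator_def Lf_def gag_integrand_def ex)
    next
      case False
      then have "y + 1 * r \<notin> {y - 1/2..<(y - 1/2) + 1}" by auto
      then show ?thesis using False by simp
    qed
  qed
  also have "\<dots> = (\<integral>\<^sup>+x. indicator {y - 1/2..<(y - 1/2) + 1} x * ?f x \<partial>lborel)"
    using nn_integral_real_affine[of "\<lambda>x. indicator {y - 1/2..<(y - 1/2) + 1} x * ?f x" 1 y] by simp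
  also have "\<dots> = (\<integral>\<^sup>+x. indicator {0..<1} x * ?f x \<partial>lborel)"
    by (rule per_shift) (auto simp: fper)
  also have "\<dots> = (\<integral>\<^sup>+x. indicator {0..1} x * ?f x \<partial>lborel)"
    by (rule closed_open_ae[symmetric])
  finally show ?thesis .
qed

lemma Qe_meas[measurable]: "(\<lambda>z. Qe (fst z) (snd z)) \<in> borel_measurable (lborel \<Otimes>\<^sub>M lborel)"
  unfolding Qe_def by (rule lborel.borel_measurable_nn_integral) (unfold Kf_def dl_def, measurable)

lemma F5: "(\<integral>\<^sup>+z. indicator ({0..1} \<times> {0..1}) z * Qe (fst z) (snd z) \<partial>lborel)
   \<le> ennreal (1 / q) * (\<integral>\<^sup>+z. indicator ({0..1} \<times> {0..1}) z * ennreal (gagf z) \<partial>lborel)"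
proof -
  have "(\<integral>\<^sup>+z. indicator ({0..1} \<times> {0..1}) z * Qe (fst z) (snd z) \<partial>lborel)
      = (\<integral>\<^sup>+y. indicator {0..1} y * (\<integral>\<^sup>+x. indicator {0..1} x * Qe x y \<partial>lborel) \<partial>lborel)"
    using prod_split[of "\<lambda>z. Qe (fst z) (snd z)"] by simp
  also have "\<dots> \<le> (\<integral>\<^sup>+y. ennreal (1 / q) * (indicator {0..1} y * R y) \<partial>lborel)"
  proof (intro nn_integral_mono)
    fix y
    show "indicator {0..1} y * (\<integral>\<^sup>+x. indicator {0..1} x * Qe x y \<partial>lborel) \<le> ennreal (1 / q) * (indicator {0..1} y * R y)"
      using F3[of y] by (cases "y \<in> {0..1}") simp_all
  qed
  also have "\<dots> = ennreal (1 / q) * (\<integral>\<^sup>+y. indicator {0..1} y * R y \<partial>lborel)"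
    by (rule nn_integral_cmult) (unfold F4, measurable)
  also have "(\<integral>\<^sup>+y. indicator {0..1} y * R y \<partial>lborel) = (\<integral>\<^sup>+z. indicator ({0..1} \<times> {0..1}) z * ennreal (gagf z) \<partial>lborel)"
    unfolding F4 using prod_split[of "\<lambda>z. ennreal (gagf z)"] by simp
  finally show ?thesis .
qed

end


context acurve begin

lemma PW:
  assumes q: "q \<ge> 1"
  shows "norm (proj_perp (v y) (u x - u y)) powr q / norm (u x - u y) powr (2 * q)
      \<le> bil u powr (2 * q) * integral {0..1} (\<lambda>t. Kf v q y (dl x y) t)"
proof -
  define d where "d = circ_dist x y"
  define \<delta> where "\<delta> = dl x y"
  have ad: "\<bar>\<delta>\<bar> = d" unfolding d_def \<delta>_def dl_def circ_dist_def ..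
  have uxy: "u x = u (y + \<delta>)" unfolding \<delta>_def dl_def by (rule u_delta)
  show ?thesis
  proof (cases "d = 0")
    case True
    then have "\<delta> = 0" using ad by simp
    then have "u x = u y" using uxy by simp
    then show ?thesis using \<open>\<delta> = 0\<close> unfolding \<delta>_def by (simp add: Kf_def)
  next
    case False
    then have d0: "d > 0" using circ_dist_nonneg[of x y] unfolding d_def by simp
    define B where "B = bil u"
    define w where "w = u x - u y"
    have bb: "d / norm w \<le> B" "w \<noteq> 0" using bil_bound[of x y] d0 unfolding d_def B_def w_def by auto
    have nw: "norm w > 0" using bb by simp
    have B0: "B > 0" using bb d0 nw by (smt (verit) divide_pos_pos)
    have wl: "d / B \<le> norm w" using bb(1) B0 nw by (simp add: field_simps)
    define g where "g = (\<lambda>t. norm (v (y + t * \<delta>) - v y))"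
    define I1 where "I1 = integral {0..1} g"
    have cg: "continuous_on {0..1} g" unfolding g_def by (rule cont_g)
    have I10: "I1 \<ge> 0" unfolding I1_def g_def
      by (rule integral_nonneg[OF integrable_continuous_interval[OF cont_g]]) simp
    have P: "norm (proj_perp (v y) w) \<le> d * I1"
      using proj_bound[where x=x and y=y] unfolding w_def d_def I1_def g_def \<delta>_def dl_def by simp
    have "norm (proj_perp (v y) w) powr q / norm w powr (2 * q) \<le> (d * I1) powr q / (d / B) powr (2 * q)"
    proof (rule frac_le)
      show "0 \<le> (d * I1) powr q" by simp
      show "norm (proj_perp (v y) w) powr q \<le> (d * I1) powr q" using P q by (intro powr_mono2) auto
      show "0 < (d / B) powr (2 * q)" using d0 B0 by simp
      show "(d / B) powr (2 * q) \<le> norm w powr (2 * q)" using wl d0 B0 q by (simp add: powr_mono2)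
    qed
    also have "(d * I1) powr q / (d / B) powr (2 * q) = B powr (2 * q) * (I1 powr q / d powr q)"
    proof -
      have "(d * I1) powr q = d powr q * I1 powr q" using d0 I10 by (simp add: powr_mult)
      moreover have "(d / B) powr (2 * q) = d powr q * d powr q / B powr (2 * q)"
        using d0 B0 by (simp add: powr_divide powr_add[symmetric])
      ultimately show ?thesis using d0 B0 by (simp add: field_simps)
    qed
    also have "\<dots> \<le> B powr (2 * q) * (integral {0..1} (\<lambda>t. g t powr q) / d powr q)"
      using jensen_powr[OF cg _ q] d0 unfolding I1_def g_def
      by (intro mult_left_mono divide_right_mono) auto
    also have "integral {0..1} (\<lambda>t. g t powr q) / d powr q = integral {0..1} (\<lambda>t. Kf v q y (dl x y) t)"
      unfolding Kf_def g_def \<delta>_def[symmetric] ad by simp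
    finally show ?thesis unfolding w_def B_def .
  qed
qed

end

lemma Lam_ineq:
  fixes a b q L :: real
  assumes a: "1 / L \<le> a" "a \<le> L" and b: "1 / L \<le> b" "b \<le> L" and L: "L \<ge> 1" and q: "q \<ge> 2"
  shows "\<bar>a * b - b powr q\<bar> \<le> q^2 * L powr (2 * q) * (L - 1)"
proof -
  have L0: "L > 0" using L by simp
  have a0: "a > 0" "b > 0" using a b L0 by (auto intro: less_le_trans[of 0 "1/L"])
  define M where "M = L powr q"
  have M1: "M \<ge> 1" unfolding M_def using L q by (simp add: ge_one_powr_ge_zero)
  have "L powr 2 \<le> M" unfolding M_def using L q by (intro powr_mono) auto
  then have L2: "L * L \<le> M" using L0 by (simp add: power2_eq_square[symmetric] powr_numeral)
  have "1 / M \<le> 1 / (L * L)" using L2 L0 M1 by (intro divide_left_mono) auto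
  have ab1: "a * b \<le> L * L" using a b a0 by (intro mult_mono) auto
  have ab2: "1 / (L * L) \<le> a * b" using a b L0 a0
    by (metis mult_mono' divide_pos_pos less_imp_le times_divide_times_eq mult_1 zero_less_one)
  have bq1: "b powr q \<le> M" unfolding M_def using b a0 q by (intro powr_mono2) auto
  have bq2: "1 / M \<le> b powr q"
  proof -
    have "(1 / L) powr q \<le> b powr q" using b L0 q by (intro powr_mono2) auto
    then show ?thesis unfolding M_def using L0 by (simp add: powr_divide)
  qed
  have "\<bar>a * b - b powr q\<bar> \<le> M - 1 / M"
    using ab1 ab2 bq1 bq2 L2 \<open>1 / M \<le> 1 / (L * L)\<close> by linarith
  also have "\<dots> \<le> M * M - 1"
  proof -
    have "M - 1 / M \<le> M * M - 1 \<longleftrightarrow> M * M - 1 \<le> M * (M * M - 1)" using M1 by (simp add: field_simps)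
    moreover have "M * M - 1 \<le> M * (M * M - 1)"
    proof -
      have "1 \<le> M * M" using M1 mult_mono[of 1 M 1 M] by simp
      then have "1 * (M * M - 1) \<le> M * (M * M - 1)" using M1 by (intro mult_right_mono) auto
      then show ?thesis by simp
    qed
    ultimately show ?thesis by simp
  qed
  also have "M * M = L powr (2 * q)" unfolding M_def by (simp add: powr_add[symmetric])
  also have "L powr (2 * q) - 1 \<le> 2 * q * L powr (2 * q - 1) * (L - 1)"
    using tangent_powr[of 1 L "2 * q"] L q by (simp add: algebra_simps)
  also have "\<dots> \<le> q^2 * L powr (2 * q) * (L - 1)"
  proof -
    have "2 * q \<le> q^2" using q by (simp add: power2_eq_square)
    moreover have "L powr (2 * q - 1) \<le> L powr (2 * q)" using L by (intro powr_mono) auto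
    ultimately show ?thesis using L q by (intro mult_right_mono mult_mono) auto
  qed
  finally show ?thesis .
qed



lemma Kf_cont: assumes "continuous_on UNIV w" "q > 0" shows "continuous_on {0..1} (\<lambda>t. Kf w q y h t)"
proof (cases "h = 0")
  case True then show ?thesis by (simp add: Kf_def)
next
  case False
  have "continuous_on {0..1} (\<lambda>t. norm (w (y + t * h) - w y) powr q)"
  proof (rule continuous_on_powr')
    show "continuous_on {0..1} (\<lambda>t. norm (w (y + t * h) - w y))"
      by (intro continuous_intros continuous_on_compose2[OF assms(1)]) auto
  qed (use assms(2) in auto)
  then show ?thesis unfolding Kf_def by (rule continuous_on_divide[OF _ continuous_on_const]) (use False in simp)
qed

theorem proposition3p4:
  fixes u :: "real \<Rightarrow> real ^ 'n" and q \<Lambda> :: real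
  assumes "q > 2" and "CARD('n) \<ge> 2" and "admissible q u" and "\<Lambda> \<ge> 1"
    and "\<And>x. 1 / \<Lambda> \<le> norm (dcurve u x) \<and> norm (dcurve u x) \<le> \<Lambda>"
  shows "\<bar>TP_cl q u - TP q u\<bar>
    \<le> bil u powr (2 * q) * \<Lambda> powr (2 * q) * gag_seminorm (dcurve u) (1 - 1 / q) q powr q * (\<Lambda> - 1)"
proof -
  note q = assms(1) and L = assms(4) and vb = assms(5)
  from assms(3) obtain c0 where per: "\<And>x. u (x + 1) = u x" and C1: "u C1_differentiable_on UNIV"
    and gi: "set_integrable lborel ({0..1} \<times> {0..1}) (gag_integrand (dcurve u) (1 - 1 / q) q)"
    and inj: "inj_on u {0..<1}" and c0: "c0 > 0" and vlow: "\<And>x. norm (dcurve u x) \<ge> c0"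
    unfolding admissible_def W2q_def by blast
  interpret acurve u c0 using per C1 inj c0 vlow by unfold_locales auto
  interpret W: wq v q using contv vper q by unfold_locales auto
  define A where "A = ({0..1} \<times> {0..1} :: (real \<times> real) set)"
  define G where "G z = norm (proj_perp (v (snd z)) (u (fst z) - u (snd z))) powr q / norm (u (fst z) - u (snd z)) powr (2 * q)" for z
  define B where "B = bil u powr (2 * q)"
  define Gag where "Gag = (LINT z : A | lborel. W.gagf z)"
  have mu[measurable]: "u \<in> borel_measurable borel" using contu by (rule borel_measurable_continuous_onI)
  have mG2: "G \<in> borel_measurable (lborel \<Otimes>\<^sub>M lborel)" unfolding G_def proj_perp_def by measurable
  have mG[measurable]: "G \<in> borel_measurable lborel" using mG2 by (simp add: lborel_prod)
  have G0: "G z \<ge> 0" for z unfolding G_def by simp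
  have B0: "B \<ge> 0" unfolding B_def by simp
  have gi': "integrable lborel (\<lambda>z. indicator A z * W.gagf z)"
    using gi unfolding set_integrable_def A_def by simp
  have Gag0: "Gag \<ge> 0" unfolding Gag_def set_lebesgue_integral_def
    by (intro integral_nonneg_AE) (auto simp: gag_integrand_def)
  have gagnn: "(\<integral>\<^sup>+z. indicator A z * ennreal (W.gagf z) \<partial>lborel) = ennreal Gag"
  proof -
    have "(\<integral>\<^sup>+z. indicator A z * ennreal (W.gagf z) \<partial>lborel) = (\<integral>\<^sup>+z. ennreal (indicator A z * W.gagf z) \<partial>lborel)"
      by (intro nn_integral_cong) (simp add: ind_ennreal)
    also have "\<dots> = ennreal (integral\<^sup>L lborel (\<lambda>z. indicator A z * W.gagf z))"
      by (rule nn_integral_eq_integral[OF gi']) (auto simp: gag_integrand_def)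
    finally show ?thesis unfolding Gag_def set_lebesgue_integral_def by simp
  qed
  have Qe_eq: "W.Qe x y = ennreal (integral {0..1} (\<lambda>t. Kf v q y (dl x y) t))" for x y
  proof -
    have "((\<lambda>t. Kf v q y (dl x y) t) has_integral integral {0..1} (\<lambda>t. Kf v q y (dl x y) t)) {0..1}"
      using integrable_continuous_interval[OF Kf_cont[OF contv]] q by (simp add: integrable_integral)
    from nn_integral_has_integral_lebesgue[OF _ this] show ?thesis
      unfolding W.Qe_def by (simp add: Kf_def)
  qed
  have step1: "(\<integral>\<^sup>+z. indicator A z * ennreal (G z) \<partial>lborel) \<le> ennreal (B * (1 / q) * Gag)"
  proof -
    have "(\<integral>\<^sup>+z. indicator A z * ennreal (G z) \<partial>lborel) \<le> (\<integral>\<^sup>+z. ennreal B * (indicator A z * W.Qe (fst z) (snd z)) \<partial>lborel)"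
    proof (intro nn_integral_mono)
      fix z :: "real \<times> real"
      have "G z \<le> B * integral {0..1} (\<lambda>t. Kf v q (snd z) (dl (fst z) (snd z)) t)"
        unfolding G_def B_def using PW[of q "snd z" "fst z"] q by simp
      then have "ennreal (G z) \<le> ennreal B * W.Qe (fst z) (snd z)"
        unfolding Qe_eq using B0 by (simp add: ennreal_mult'[symmetric] ennreal_leI)
      then show "indicator A z * ennreal (G z) \<le> ennreal B * (indicator A z * W.Qe (fst z) (snd z))"
        by (cases "z \<in> A") auto
    qed
    also have "\<dots> = ennreal B * (\<integral>\<^sup>+z. indicator A z * W.Qe (fst z) (snd z) \<partial>lborel)"
      by (rule nn_integral_cmult) (unfold A_def lborel_prod[symmetric], measurable)
    also have "\<dots> \<le> ennreal B * (ennreal (1 / q) * ennreal Gag)"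
      using W.F5 unfolding A_def[symmetric] gagnn by (intro mult_left_mono) auto
    also have "\<dots> = ennreal (B * (1 / q) * Gag)"
      using B0 q by (simp add: ennreal_mult'[symmetric] mult.assoc)
    finally show ?thesis .
  qed
  have Asets[measurable]: "A \<in> sets lborel" unfolding A_def by (simp add: borel_closed closed_Times)
  have IG: "integrable lborel (\<lambda>z. indicator A z * G z)"
  proof (rule integrableI_nonneg)
    show "(\<lambda>z. indicator A z * G z) \<in> borel_measurable lborel" by measurable
    show "AE z in lborel. 0 \<le> indicator A z * G z" using G0 by (simp add: indicator_def)
    have "(\<integral>\<^sup>+z. ennreal (indicator A z * G z) \<partial>lborel) = (\<integral>\<^sup>+z. indicator A z * ennreal (G z) \<partial>lborel)"
      by (intro nn_integral_cong) (simp add: ind_ennreal)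
    also have "\<dots> < \<infinity>" using step1 by (simp add: le_less_trans)
    finally show "(\<integral>\<^sup>+z. ennreal (indicator A z * G z) \<partial>lborel) < \<infinity>" .
  qed
  have intG: "integral\<^sup>L lborel (\<lambda>z. indicator A z * G z) \<le> B * (1 / q) * Gag"
  proof -
    have "ennreal (integral\<^sup>L lborel (\<lambda>z. indicator A z * G z)) = (\<integral>\<^sup>+z. ennreal (indicator A z * G z) \<partial>lborel)"
      by (rule nn_integral_eq_integral[OF IG, symmetric]) (use G0 in \<open>simp add: indicator_def\<close>)
    also have "\<dots> = (\<integral>\<^sup>+z. indicator A z * ennreal (G z) \<partial>lborel)"
      by (intro nn_integral_cong) (simp add: ind_ennreal)
    finally have "ennreal (integral\<^sup>L lborel (\<lambda>z. indicator A z * G z)) \<le> ennreal (B * (1 / q) * Gag)"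
      using step1 by simp
    then show ?thesis using B0 Gag0 q by (subst (asm) ennreal_le_iff) auto
  qed
  define Fc where "Fc z = G z * norm (v (fst z)) * norm (v (snd z))" for z
  define Fw where "Fw z = norm (v (snd z)) powr q * G z" for z
  have mv2: "(\<lambda>z. v (fst z)) \<in> borel_measurable (lborel \<Otimes>\<^sub>M lborel)" "(\<lambda>z. v (snd z)) \<in> borel_measurable (lborel \<Otimes>\<^sub>M lborel)"
    by measurable
  have mv[measurable]: "(\<lambda>z. v (fst z)) \<in> borel_measurable lborel" "(\<lambda>z. v (snd z)) \<in> borel_measurable lborel"
    using mv2 by (simp_all add: lborel_prod)
  have eqc: "TP_cl q u = (1 / q) * integral\<^sup>L lborel (\<lambda>z. indicator A z * Fc z)"
    unfolding TP_cl_def set_lebesgue_integral_def A_def Fc_def G_def Let_def by simp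
  have eqw: "TP q u = (1 / q) * integral\<^sup>L lborel (\<lambda>z. indicator A z * Fw z)"
  proof -
    have "wedge_norm (v (snd z)) (u (fst z) - u (snd z)) powr q / norm (u (fst z) - u (snd z)) powr (2 * q) = Fw z" for z
      unfolding Fw_def G_def wedge_norm_eq by (simp add: powr_mult)
    then show ?thesis
      unfolding TP_def set_lebesgue_integral_def A_def Let_def by simp
  qed
  have Lb: "1 / \<Lambda> \<le> norm (v x)" "norm (v x) \<le> \<Lambda>" for x using vb[of x] by auto
  have L0: "\<Lambda> > 0" using L by simp
  have IFc: "integrable lborel (\<lambda>z. indicator A z * Fc z)"
  proof (rule Bochner_Integration.integrable_bound[OF integrable_mult_right[OF IG, of "\<Lambda> * \<Lambda>"]])
    show "(\<lambda>z. indicator A z * Fc z) \<in> borel_measurable lborel" unfolding Fc_def by measurable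
    show "AE z in lborel. norm (indicator A z * Fc z) \<le> norm (\<Lambda> * \<Lambda> * (indicator A z * G z))"
    proof (intro AE_I2)
      fix z :: "real \<times> real"
      have "norm (v (fst z)) * norm (v (snd z)) \<le> \<Lambda> * \<Lambda>" using mult_mono[OF Lb(2) Lb(2)] L0 by simp
      then have "G z * (norm (v (fst z)) * norm (v (snd z))) \<le> G z * (\<Lambda> * \<Lambda>)" using G0 by (intro mult_left_mono) auto
      then show "norm (indicator A z * Fc z) \<le> norm (\<Lambda> * \<Lambda> * (indicator A z * G z))"
        unfolding Fc_def using G0 by (simp add: indicator_def abs_mult mult_ac)
    qed
  qed
  have IFw: "integrable lborel (\<lambda>z. indicator A z * Fw z)"
  proof (rule Bochner_Integration.integrable_bound[OF integrable_mult_right[OF IG, of "\<Lambda> powr q"]])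
    show "(\<lambda>z. indicator A z * Fw z) \<in> borel_measurable lborel" unfolding Fw_def by measurable
    show "AE z in lborel. norm (indicator A z * Fw z) \<le> norm (\<Lambda> powr q * (indicator A z * G z))"
    proof (intro AE_I2)
      fix z :: "real \<times> real"
      have "norm (v (snd z)) powr q \<le> \<Lambda> powr q" using Lb q by (intro powr_mono2) auto
      then have "norm (v (snd z)) powr q * G z \<le> \<Lambda> powr q * G z" using G0 by (intro mult_right_mono) auto
      then show "norm (indicator A z * Fw z) \<le> norm (\<Lambda> powr q * (indicator A z * G z))"
        unfolding Fw_def using G0 by (simp add: indicator_def abs_mult mult_ac)
    qed
  qed
  define C0 where "C0 = q^2 * \<Lambda> powr (2 * q) * (\<Lambda> - 1)"
  have C00: "C0 \<ge> 0" unfolding C0_def using L by simp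
  have "\<bar>integral\<^sup>L lborel (\<lambda>z. indicator A z * Fc z) - integral\<^sup>L lborel (\<lambda>z. indicator A z * Fw z)\<bar>
      = \<bar>integral\<^sup>L lborel (\<lambda>z. indicator A z * Fc z - indicator A z * Fw z)\<bar>"
    using IFc IFw by simp
  also have "\<dots> \<le> integral\<^sup>L lborel (\<lambda>z. C0 * (indicator A z * G z))"
  proof (rule integral_abs_bound_integral)
    show "integrable lborel (\<lambda>z. indicator A z * Fc z - indicator A z * Fw z)" using IFc IFw by simp
    show "integrable lborel (\<lambda>z. C0 * (indicator A z * G z))" using IG by simp
    fix z :: "real \<times> real"
    have "\<bar>norm (v (fst z)) * norm (v (snd z)) - norm (v (snd z)) powr q\<bar> \<le> C0"
      unfolding C0_def using Lb L q by (intro Lam_ineq) auto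
    then have "G z * \<bar>norm (v (fst z)) * norm (v (snd z)) - norm (v (snd z)) powr q\<bar> \<le> G z * C0"
      using G0 by (intro mult_left_mono) auto
    moreover have "\<bar>Fc z - Fw z\<bar> = G z * \<bar>norm (v (fst z)) * norm (v (snd z)) - norm (v (snd z)) powr q\<bar>"
    proof -
      have "Fc z - Fw z = G z * (norm (v (fst z)) * norm (v (snd z)) - norm (v (snd z)) powr q)"
        unfolding Fc_def Fw_def by (simp add: algebra_simps)
      then show ?thesis using G0[of z] by (simp add: abs_mult)
    qed
    ultimately show "\<bar>indicator A z * Fc z - indicator A z * Fw z\<bar> \<le> C0 * (indicator A z * G z)"
      by (simp add: indicator_def mult_ac)
  qed
  also have "\<dots> = C0 * integral\<^sup>L lborel (\<lambda>z. indicator A z * G z)" by simp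
  also have "\<dots> \<le> C0 * (B * (1 / q) * Gag)" using intG C00 by (rule mult_left_mono)
  finally have main: "\<bar>integral\<^sup>L lborel (\<lambda>z. indicator A z * Fc z) - integral\<^sup>L lborel (\<lambda>z. indicator A z * Fw z)\<bar>
      \<le> C0 * (B * (1 / q) * Gag)" .
  have "\<bar>TP_cl q u - TP q u\<bar> = (1 / q) * \<bar>integral\<^sup>L lborel (\<lambda>z. indicator A z * Fc z) - integral\<^sup>L lborel (\<lambda>z. indicator A z * Fw z)\<bar>"
    unfolding eqc eqw right_diff_distrib[symmetric] abs_mult using q by simp
  also have "\<dots> \<le> (1 / q) * (C0 * (B * (1 / q) * Gag))" using main q by (intro mult_left_mono) auto
  also have "\<dots> = B * \<Lambda> powr (2 * q) * Gag * (\<Lambda> - 1)"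
    unfolding C0_def using q by (simp add: power2_eq_square field_simps)
  also have "Gag = gag_seminorm v (1 - 1 / q) q powr q"
  proof -
    have "gag_seminorm v (1 - 1 / q) q = Gag powr (1 / q)" unfolding gag_seminorm_def Gag_def A_def ..
    then show ?thesis using Gag0 q by (cases "Gag = 0") (simp_all add: powr_powr)
  qed
  finally show ?thesis unfolding B_def .
qed


end
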